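(* Fix an integer $l\ge0$. For every sufficiently large odd prime $r$, with $q=e^{2\pi\sqrt{-1}/r}$, one can write $$\left(\tfrac{r-1}{2}\right)!\,G_{2l}(q)=\sum_{m=0}^{(r-3)/2}a_{r,m}\,(q-1)^{\frac{r-1}{2}-l+m}+(q-1)^{r-1-l}\,u_r$$ with $a_{r,m}\in\mathbb{Z}_{(r)}$ and $u_r\in\mathbb{Z}_{(r)}[q]$, such that for each fixed $m\ge0$ the function $r\mapsto a_{r,m}$ is a Fermat function with residue $g'_{l,m}$. (In the paper's terminology: with respect to $l(r)=\frac{r-3}{2}$, the Fermat limit of $\left(\frac{r-1}{2}\right)!\,G_{2l}(q)/(q-1)^{\frac{r-1}{2}-l}$ is $\sum_{m\ge0}g'_{l,m}(t-1)^m$.)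
   Context: $G_{2l}(q)=\sum_{k=0}^{r-1}k^{2l}q^{k^2}$ is the weighted Gauss sum. $\mathbb{Z}_{(m)}=\mathbb{Z}[\frac12,\dots,\frac1{m-1}]$ for $m\ge3$, $\mathbb{Z}_{(m)}=\mathbb{Z}$ for $m\le2$. A function $r\mapsto f(r)\in\mathbb{Z}_{(r)}$ on large primes is a Fermat function with residue $\lambda\in\mathbb{Q}$ if $f(r)\equiv\lambda\pmod r$ for all large primes $r$. $\sigma_j$ denotes the $j$-th elementary symmetric polynomial ($\sigma_0=1$), and $g'_{l,m}$ is the residue of the Fermat function $H_{l,m}(r)=\frac{((r-1)/2)!}{((r-1)/2-l+m)!}(-1)^{m+1}\sigma_m(1,2,\dots,\frac{r-1}{2}-l+m-1)$. *)

theory Defs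
  imports "HOL-Analysis.Analysis" "HOL-Computational_Algebra.Polynomial"
begin

text \<open>Z_(m) = Z[1/2,...,1/(m-1)] as a subset of the rationals: rationals whose
  reduced denominator has only prime factors < m (for m <= 2 this is Z).\<close>
definition Zloc :: "nat \<Rightarrow> rat set" where
  "Zloc m = {x. \<forall>p::nat. prime p \<and> int p dvd snd (quotient_of x) \<longrightarrow> p < m}"

definition rat_cong :: "rat \<Rightarrow> rat \<Rightarrow> nat \<Rightarrow> bool" where
  "rat_cong a b r \<longleftrightarrow> int r dvd fst (quotient_of (a - b))"

definition fermat_fun :: "(nat \<Rightarrow> rat) \<Rightarrow> rat \<Rightarrow> bool" where
  "fermat_fun f c \<longleftrightarrow> (\<exists>R. \<forall>r. prime r \<and> r \<ge> R \<longrightarrow> f r \<in> Zloc r \<and> rat_cong (f r) c r)"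

definition wgauss :: "nat \<Rightarrow> nat \<Rightarrow> complex \<Rightarrow> complex" where
  "wgauss r j q = (\<Sum>k<r. of_nat k ^ j * q ^ (k^2))"

definition esym :: "nat \<Rightarrow> nat set \<Rightarrow> rat" where
  "esym m S = (\<Sum>T\<in>{T. T \<subseteq> S \<and> card T = m}. \<Prod>x\<in>T. of_nat x)"

definition Hfun :: "nat \<Rightarrow> nat \<Rightarrow> nat \<Rightarrow> rat" where
  "Hfun l m r = (let N = (r - 1) div 2 + m - l in
     fact ((r - 1) div 2) / fact N * (-1) ^ (m + 1) * esym m {1..<N})"

end

theory Submission imports Defs "HOL-Number_Theory.Cong" begin

lemma Zloc_iff: "x \<in> Zloc r \<longleftrightarrow> (\<exists>a b::int. b \<noteq> 0 \<and> (\<forall>p::nat. prime p \<and> int p dvd b \<longrightarrow> p < r) \<and> x = of_int a / of_int b)"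
proof
  assume "x \<in> Zloc r"
  obtain n d where nd: "quotient_of x = (n, d)" by (cases "quotient_of x")
  then show "\<exists>a b::int. b \<noteq> 0 \<and> (\<forall>p::nat. prime p \<and> int p dvd b \<longrightarrow> p < r) \<and> x = of_int a / of_int b"
    using \<open>x \<in> Zloc r\<close> quotient_of_div[OF nd] quotient_of_denom_pos[OF nd]
    by (intro exI[of _ n] exI[of _ d]) (auto simp: Zloc_def)
next
  assume "\<exists>a b::int. b \<noteq> 0 \<and> (\<forall>p::nat. prime p \<and> int p dvd b \<longrightarrow> p < r) \<and> x = of_int a / of_int b"
  then obtain a b :: int where b: "b \<noteq> 0" "\<forall>p::nat. prime p \<and> int p dvd b \<longrightarrow> p < r" "x = of_int a / of_int b" by blast
  obtain n d where nd: "quotient_of x = (n, d)" by (cases "quotient_of x")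
  have d: "d > 0" using quotient_of_denom_pos[OF nd] .
  have cop: "coprime n d" using quotient_of_coprime[OF nd] .
  have "of_int n / of_int d = (of_int a / of_int b :: rat)" using quotient_of_div[OF nd] b(3) by simp
  then have "of_int (n * b) = (of_int (a * d) :: rat)" using b(1) d by (simp add: field_simps)
  then have eq: "n * b = a * d" by (simp only: of_int_eq_iff)
  show "x \<in> Zloc r" unfolding Zloc_def
  proof (safe)
    fix p :: nat assume p: "prime p" "int p dvd snd (quotient_of x)"
    then have pd: "int p dvd d" using nd by simp
    have pp: "prime (int p)" using p(1) by simp
    have "int p dvd n * b" using eq pd by (metis dvd_mult)
    moreover have "\<not> int p dvd n"
      using cop pd pp by (meson coprime_common_divisor not_prime_unit)
    ultimately have "int p dvd b" using pp by (simp add: prime_dvd_mult_iff)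
    then show "p < r" using b(2) p(1) by blast
  qed
qed


lemma ZlocI: "b \<noteq> 0 \<Longrightarrow> (\<And>p::nat. prime p \<Longrightarrow> int p dvd b \<Longrightarrow> p < r) \<Longrightarrow> of_int a / of_int b \<in> Zloc r"
  unfolding Zloc_iff by blast

lemma ZlocE: assumes "x \<in> Zloc r"
  obtains a b :: int where "b \<noteq> 0" "\<forall>p::nat. prime p \<and> int p dvd b \<longrightarrow> p < r" "x = of_int a / of_int b"
proof -
  from assms obtain a b :: int where "b \<noteq> 0" "\<forall>p::nat. prime p \<and> int p dvd b \<longrightarrow> p < r" "x = of_int a / of_int b"
    unfolding Zloc_iff by blast
  then show ?thesis using that by blast
qed

lemma Zloc_int [simp]: "of_int a \<in> Zloc r"
  using ZlocI[of 1 r a] by (simp add: prime_nat_iff)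

lemma Zloc_nat [simp]: "of_nat a \<in> Zloc r"
  using Zloc_int[of "int a" r] by simp

lemma Zloc_0 [simp]: "0 \<in> Zloc r" and Zloc_1 [simp]: "1 \<in> Zloc r"
  using Zloc_int[of 0 r] Zloc_int[of 1 r] by auto

lemma Zloc_numeral [simp]: "numeral k \<in> Zloc r"
  using Zloc_nat[of "numeral k" r] by simp

lemma prime_dvd_mult_lt:
  assumes "\<forall>p::nat. prime p \<and> int p dvd b1 \<longrightarrow> p < r"
    "\<forall>p::nat. prime p \<and> int p dvd b2 \<longrightarrow> p < r" "prime p" "int p dvd b1 * b2"
  shows "p < r"
proof -
  have "prime (int p)" using assms(3) by simp
  then have "int p dvd b1 \<or> int p dvd b2" using assms(4) by (simp add: prime_dvd_mult_iff)
  then show ?thesis using assms by blast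
qed

lemma Zloc_add [simp,intro]: assumes "x \<in> Zloc r" "y \<in> Zloc r" shows "x + y \<in> Zloc r"
proof -
  obtain b1 a1 where 1: "b1 \<noteq> 0" "\<forall>p::nat. prime p \<and> int p dvd b1 \<longrightarrow> p < r" "x = of_int a1 / of_int b1"
    using assms(1) by (rule ZlocE)
  obtain b2 a2 where 2: "b2 \<noteq> 0" "\<forall>p::nat. prime p \<and> int p dvd b2 \<longrightarrow> p < r" "y = of_int a2 / of_int b2"
    using assms(2) by (rule ZlocE)
  have "x + y = of_int (a1 * b2 + a2 * b1) / of_int (b1 * b2)" using 1 2 by (simp add: field_simps)
  moreover have "of_int (a1 * b2 + a2 * b1) / of_int (b1 * b2) \<in> Zloc r"
  proof (rule ZlocI)
    show "b1 * b2 \<noteq> 0" using 1 2 by simp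
    fix p :: nat assume "prime p" "int p dvd b1 * b2"
    then show "p < r" using prime_dvd_mult_lt[of b1 r b2 p] 1(2) 2(2) by blast
  qed
  ultimately show ?thesis by simp
qed

lemma Zloc_mult [simp,intro]: assumes "x \<in> Zloc r" "y \<in> Zloc r" shows "x * y \<in> Zloc r"
proof -
  obtain b1 a1 where 1: "b1 \<noteq> 0" "\<forall>p::nat. prime p \<and> int p dvd b1 \<longrightarrow> p < r" "x = of_int a1 / of_int b1"
    using assms(1) by (rule ZlocE)
  obtain b2 a2 where 2: "b2 \<noteq> 0" "\<forall>p::nat. prime p \<and> int p dvd b2 \<longrightarrow> p < r" "y = of_int a2 / of_int b2"
    using assms(2) by (rule ZlocE)
  have "x * y = of_int (a1 * a2) / of_int (b1 * b2)" using 1 2 by (simp add: field_simps)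
  moreover have "of_int (a1 * a2) / of_int (b1 * b2) \<in> Zloc r"
  proof (rule ZlocI)
    show "b1 * b2 \<noteq> 0" using 1 2 by simp
    fix p :: nat assume "prime p" "int p dvd b1 * b2"
    then show "p < r" using prime_dvd_mult_lt[of b1 r b2 p] 1(2) 2(2) by blast
  qed
  ultimately show ?thesis by simp
qed

lemma Zloc_uminus [simp,intro]: assumes "x \<in> Zloc r" shows "- x \<in> Zloc r"
  using Zloc_mult[OF Zloc_int[of "-1" r] assms] by simp

lemma Zloc_diff [simp,intro]: assumes "x \<in> Zloc r" "y \<in> Zloc r" shows "x - y \<in> Zloc r"
  using Zloc_add[OF assms(1) Zloc_uminus[OF assms(2)]] by simp

lemma Zloc_power [simp,intro]: "x \<in> Zloc r \<Longrightarrow> x ^ n \<in> Zloc r"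
  by (induction n) auto

lemma Zloc_sum [intro]: "(\<And>i. i \<in> A \<Longrightarrow> f i \<in> Zloc r) \<Longrightarrow> sum f A \<in> Zloc r"
  by (induction A rule: infinite_finite_induct) auto

lemma Zloc_prod [intro]: "(\<And>i. i \<in> A \<Longrightarrow> f i \<in> Zloc r) \<Longrightarrow> prod f A \<in> Zloc r"
  by (induction A rule: infinite_finite_induct) auto

lemma Zloc_inv_nat: assumes "0 < j" "j < r" shows "1 / of_nat j \<in> Zloc r"
proof -
  have "of_int 1 / of_int (int j) \<in> Zloc r"
  proof (rule ZlocI)
    fix p :: nat assume "prime p" "int p dvd int j"
    then have "p dvd j" by simp
    then have "p \<le> j" using assms(1) by (simp add: dvd_imp_le)
    then show "p < r" using assms by simp
  qed (use assms in auto)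
  then show ?thesis by simp
qed

lemma Zloc_large: "\<exists>R. \<forall>r \<ge> R. x \<in> Zloc r"
proof -
  obtain n d where nd: "quotient_of x = (n, d)" by (cases "quotient_of x")
  have d: "d > 0" using quotient_of_denom_pos[OF nd] .
  have x: "x = of_int n / of_int d" using quotient_of_div[OF nd] .
  show ?thesis
  proof (intro exI[of _ "nat d + 1"] allI impI)
    fix r assume r: "nat d + 1 \<le> r"
    have "of_int n / of_int d \<in> Zloc r"
    proof (rule ZlocI)
      fix p :: nat assume "prime p" "int p dvd d"
      then have "int p \<le> d" using d by (simp add: zdvd_imp_le)
      then show "p < r" using r by linarith
    qed (use d in auto)
    then show "x \<in> Zloc r" using x by simp
  qed
qed

lemma Zloc_large_fin: "finite A \<Longrightarrow> \<exists>R. \<forall>r \<ge> R. \<forall>x\<in>A. x \<in> Zloc r"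
proof (induction A rule: finite_induct)
  case (insert a A)
  then obtain R1 where R1: "\<forall>r \<ge> R1. \<forall>x\<in>A. x \<in> Zloc r" by blast
  obtain R2 where R2: "\<forall>r \<ge> R2. a \<in> Zloc r" using Zloc_large by blast
  show ?case using R1 R2 by (intro exI[of _ "max R1 R2"]) auto
qed auto

definition cg :: "nat \<Rightarrow> rat \<Rightarrow> rat \<Rightarrow> bool" where
  "cg r x y \<longleftrightarrow> (\<exists>z\<in>Zloc r. x - y = of_nat r * z)"

lemma cg_refl [simp]: "cg r x x"
  unfolding cg_def by (intro bexI[of _ 0]) auto

lemma cg_sym: "cg r x y \<Longrightarrow> cg r y x"
  unfolding cg_def
proof -
  assume "\<exists>z\<in>Zloc r. x - y = of_nat r * z"
  then obtain z where "z \<in> Zloc r" "x - y = of_nat r * z" by blast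
  then show "\<exists>z\<in>Zloc r. y - x = of_nat r * z" by (intro bexI[of _ "-z"]) (auto simp: algebra_simps)
qed

lemma cg_trans: "cg r x y \<Longrightarrow> cg r y w \<Longrightarrow> cg r x w"
  unfolding cg_def
proof -
  assume "\<exists>z\<in>Zloc r. x - y = of_nat r * z" "\<exists>z\<in>Zloc r. y - w = of_nat r * z"
  then obtain z z' where "z \<in> Zloc r" "x - y = of_nat r * z" "z' \<in> Zloc r" "y - w = of_nat r * z'" by blast
  then show "\<exists>z\<in>Zloc r. x - w = of_nat r * z" by (intro bexI[of _ "z + z'"]) (auto simp: algebra_simps)
qed

lemma cg_add: "cg r x y \<Longrightarrow> cg r x' y' \<Longrightarrow> cg r (x + x') (y + y')"
  unfolding cg_def
proof -
  assume "\<exists>z\<in>Zloc r. x - y = of_nat r * z" "\<exists>z\<in>Zloc r. x' - y' = of_nat r * z"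
  then obtain z z' where "z \<in> Zloc r" "x - y = of_nat r * z" "z' \<in> Zloc r" "x' - y' = of_nat r * z'" by blast
  then show "\<exists>z\<in>Zloc r. x + x' - (y + y') = of_nat r * z" by (intro bexI[of _ "z + z'"]) (auto simp: algebra_simps)
qed

lemma cg_diff: "cg r x y \<Longrightarrow> cg r x' y' \<Longrightarrow> cg r (x - x') (y - y')"
  unfolding cg_def
proof -
  assume "\<exists>z\<in>Zloc r. x - y = of_nat r * z" "\<exists>z\<in>Zloc r. x' - y' = of_nat r * z"
  then obtain z z' where "z \<in> Zloc r" "x - y = of_nat r * z" "z' \<in> Zloc r" "x' - y' = of_nat r * z'" by blast
  then show "\<exists>z\<in>Zloc r. x - x' - (y - y') = of_nat r * z" by (intro bexI[of _ "z - z'"]) (auto simp: algebra_simps)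
qed

lemma cg_uminus: "cg r x y \<Longrightarrow> cg r (- x) (- y)"
  using cg_diff[of r 0 0 x y] by simp

lemma cg_mult: assumes "cg r x y" "cg r x' y'" "x' \<in> Zloc r" "y \<in> Zloc r"
  shows "cg r (x * x') (y * y')"
proof -
  obtain z z' where z: "z \<in> Zloc r" "x - y = of_nat r * z" and z': "z' \<in> Zloc r" "x' - y' = of_nat r * z'"
    using assms(1,2) unfolding cg_def by blast
  have "x * x' - y * y' = (x - y) * x' + y * (x' - y')" by (simp add: algebra_simps)
  also have "\<dots> = of_nat r * (z * x' + y * z')" using z(2) z'(2) by (simp add: algebra_simps)
  finally show ?thesis unfolding cg_def using z z' assms(3,4) by blast
qed

lemma cg_Zloc: "cg r x y \<Longrightarrow> y \<in> Zloc r \<Longrightarrow> x \<in> Zloc r"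
  unfolding cg_def
proof -
  assume "\<exists>z\<in>Zloc r. x - y = of_nat r * z" "y \<in> Zloc r"
  then obtain z where "z \<in> Zloc r" "x = y + of_nat r * z" by (auto simp: algebra_simps)
  then show "x \<in> Zloc r" using \<open>y \<in> Zloc r\<close> by simp
qed

lemma cg_sum: "(\<And>i. i \<in> A \<Longrightarrow> cg r (f i) (g i)) \<Longrightarrow> cg r (sum f A) (sum g A)"
  by (induction A rule: infinite_finite_induct) (auto intro: cg_add)

lemma cg_int: "[a = b] (mod int r) \<Longrightarrow> cg r (of_int a) (of_int b)"
proof -
  assume "[a = b] (mod int r)"
  then have "int r dvd a - b" by (simp add: cong_iff_dvd_diff cong_sym_eq)
  then obtain k where "a - b = int r * k" by blast
  then have "of_int a - of_int b = (of_nat r :: rat) * of_int k"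
    by (metis of_int_diff of_int_mult of_int_of_nat_eq)
  then show ?thesis unfolding cg_def by (intro bexI[of _ "of_int k"]) auto
qed

lemma cg_0_mult: "cg r x 0 \<Longrightarrow> y \<in> Zloc r \<Longrightarrow> cg r (x * y) 0"
  unfolding cg_def
proof -
  assume "\<exists>z\<in>Zloc r. x - 0 = of_nat r * z" "y \<in> Zloc r"
  then obtain z where "z \<in> Zloc r" "x = of_nat r * z" by auto
  then show "\<exists>z\<in>Zloc r. x * y - 0 = of_nat r * z" using \<open>y \<in> Zloc r\<close> by (intro bexI[of _ "z * y"]) auto
qed

lemma cg_r: "cg r (of_nat r) 0"
  unfolding cg_def by (intro bexI[of _ 1]) auto

lemma cg_inverse: assumes "cg r x y" "1 / x \<in> Zloc r" "1 / y \<in> Zloc r" "x \<noteq> 0" "y \<noteq> 0"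
  shows "cg r (1 / x) (1 / y)"
proof -
  obtain z where z: "z \<in> Zloc r" "x - y = of_nat r * z" using assms(1) unfolding cg_def by blast
  have "1 / x - 1 / y = - (x - y) * (1 / x) * (1 / y)" using assms(4,5) by (simp add: field_simps)
  also have "\<dots> = of_nat r * (- z * (1 / x) * (1 / y))" using z(2) by simp
  finally have "1 / x - 1 / y = of_nat r * (- z * (1 / x) * (1 / y))" .
  moreover have "- z * (1 / x) * (1 / y) \<in> Zloc r" using z(1) assms(2,3) by (intro Zloc_mult Zloc_uminus)
  ultimately show ?thesis unfolding cg_def by blast
qed

lemma cg_rat_cong: assumes "prime r" "cg r x y" shows "rat_cong x y r"
proof -
  obtain z where z: "z \<in> Zloc r" "x - y = of_nat r * z" using assms(2) unfolding cg_def by blast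
  obtain b a :: int where b: "b \<noteq> 0" "\<forall>p::nat. prime p \<and> int p dvd b \<longrightarrow> p < r" "z = of_int a / of_int b"
    using z(1) by (rule ZlocE)
  obtain n d where nd: "quotient_of (x - y) = (n, d)" by (cases "quotient_of (x - y)")
  have d: "d > 0" using quotient_of_denom_pos[OF nd] .
  have "of_int n / of_int d = (of_nat r * (of_int a / of_int b) :: rat)" using quotient_of_div[OF nd] z(2) b(3) by simp
  then have "of_int (n * b) = (of_int (int r * a * d) :: rat)" using b(1) d by (simp add: field_simps)
  then have eq: "n * b = int r * a * d" by (simp only: of_int_eq_iff)
  have pp: "prime (int r)" using assms(1) by simp
  have "int r dvd n * b" using eq by (metis dvd_triv_left mult.assoc)
  moreover have "\<not> int r dvd b" using b(2) assms(1) by blast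
  ultimately have "int r dvd n" using pp by (simp add: prime_dvd_mult_iff)
  then show ?thesis unfolding rat_cong_def using nd by simp
qed

lemma fermat_funI: assumes "\<exists>R. \<forall>r. prime r \<and> r \<ge> R \<longrightarrow> f r \<in> Zloc r \<and> cg r (f r) c"
  shows "fermat_fun f c"
  using assms cg_rat_cong unfolding fermat_fun_def by blast

definition psum :: "nat \<Rightarrow> nat \<Rightarrow> int" where
  "psum r d = (\<Sum>k<r. int k ^ d)"

lemma psum_telescope: "int r ^ Suc e = (\<Sum>i\<le>e. int (Suc e choose i) * psum r i)"
proof -
  have step: "int (Suc k) ^ Suc e - int k ^ Suc e = (\<Sum>i\<le>e. int (Suc e choose i) * int k ^ i)" for k
  proof -
    have "int (Suc k) ^ Suc e = (int k + 1) ^ Suc e" by (simp add: add.commute)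
    also have "\<dots> = (\<Sum>i\<le>Suc e. int (Suc e choose i) * int k ^ i)"
      by (subst binomial_ring) simp
    also have "\<dots> = (\<Sum>i\<le>e. int (Suc e choose i) * int k ^ i) + int k ^ Suc e"
      by (simp add: sum.atMost_Suc)
    finally show ?thesis by simp
  qed
  have "int r ^ Suc e = (\<Sum>k<r. int (Suc k) ^ Suc e - int k ^ Suc e)"
    by (subst sum_lessThan_telescope[where f = "\<lambda>k. int k ^ Suc e"]) simp
  also have "\<dots> = (\<Sum>k<r. \<Sum>i\<le>e. int (Suc e choose i) * int k ^ i)" using step by simp
  also have "\<dots> = (\<Sum>i\<le>e. \<Sum>k<r. int (Suc e choose i) * int k ^ i)" by (rule sum.swap)
  also have "\<dots> = (\<Sum>i\<le>e. int (Suc e choose i) * psum r i)"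
    by (simp add: psum_def sum_distrib_left)
  finally show ?thesis .
qed

lemma psum_low: assumes "prime r" shows "d < r - 1 \<Longrightarrow> [psum r d = 0] (mod int r)"
proof (induction d rule: less_induct)
  case (less d)
  have "int r ^ Suc d = (\<Sum>i<Suc d. int (Suc d choose i) * psum r i)"
    by (simp only: psum_telescope lessThan_Suc_atMost)
  also have "\<dots> = (\<Sum>i<d. int (Suc d choose i) * psum r i) + int (Suc d) * psum r d"
    by (simp only: sum.lessThan_Suc) simp
  finally have "int r ^ Suc d = (\<Sum>i<d. int (Suc d choose i) * psum r i) + int (Suc d) * psum r d" .
  moreover have "[int r ^ Suc d = 0] (mod int r)" by (simp add: cong_def)
  moreover have "[(\<Sum>i<d. int (Suc d choose i) * psum r i) = 0] (mod int r)"
  proof -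
    have "[(\<Sum>i<d. int (Suc d choose i) * psum r i) = (\<Sum>i<d. int (Suc d choose i) * 0)] (mod int r)"
      by (intro cong_sum cong_mult cong_refl) (use less in auto)
    then show ?thesis by simp
  qed
  ultimately have "[int (Suc d) * psum r d = 0] (mod int r)"
    by (metis (no_types, lifting) add.commute add_0 cong_add_lcancel cong_sym cong_trans)
  then have "int r dvd int (Suc d) * psum r d" by (simp add: cong_0_iff)
  moreover have "prime (int r)" using assms by simp
  moreover have "\<not> int r dvd int (Suc d)"
  proof
    assume "int r dvd int (Suc d)"
    then have "r dvd Suc d" by (metis int_dvd_int_iff)
    then have "r \<le> Suc d" by (simp add: dvd_imp_le)
    then show False using less.prems by simp
  qed
  ultimately have "int r dvd psum r d" by (simp add: prime_dvd_mult_iff)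
  then show ?case by (simp add: cong_0_iff)
qed

lemma fermat_little: assumes "prime p" shows "[int a ^ p = int a] (mod int p)"
proof (induction a)
  case 0
  have "p \<noteq> 0" using assms by auto
  then show ?case by (simp add: zero_power)
next
  case (Suc a)
  have p0: "p \<noteq> 0" using assms by auto
  have "int (Suc a) ^ p = (int a + 1) ^ p" by (simp add: add.commute)
  also have "\<dots> = (\<Sum>i\<le>p. int (p choose i) * int a ^ i)" by (subst binomial_ring) simp
  finally have e: "int (Suc a) ^ p = (\<Sum>i\<le>p. int (p choose i) * int a ^ i)" .
  have "[(\<Sum>i\<le>p. int (p choose i) * int a ^ i) = (\<Sum>i\<le>p. (if i = 0 then 1 else 0) + (if i = p then int a ^ p else 0))] (mod int p)"
  proof (rule cong_sum)
    fix i assume i: "i \<in> {..p}"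
    show "[int (p choose i) * int a ^ i = (if i = 0 then 1 else 0) + (if i = p then int a ^ p else 0)] (mod int p)"
    proof (cases "i = 0 \<or> i = p")
      case True then show ?thesis using p0 by auto
    next
      case False
      then have "p dvd (p choose i)" using i p0 assms by (intro dvd_choose_prime) auto
      then have "int p dvd int (p choose i) * int a ^ i" by (metis dvd_mult2 int_dvd_int_iff)
      then show ?thesis using False by (simp add: cong_0_iff)
    qed
  qed
  moreover have "(\<Sum>i\<le>p. (if i = 0 then 1 else 0) + (if i = p then int a ^ p else 0)) = 1 + int a ^ p"
    by (simp add: sum.distrib)
  moreover have "[1 + int a ^ p = 1 + int a] (mod int p)" using Suc.IH by (intro cong_add cong_refl)
  ultimately show ?case using e by (metis cong_trans of_nat_Suc add.commute)
qed

lemma fermat_int: assumes "prime r" "0 < k" "k < r" shows "[int k ^ (r - 1) = 1] (mod int r)"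
proof -
  have r0: "r \<noteq> 0" using assms by auto
  have "\<not> r dvd k" using assms by (auto dest: dvd_imp_le)
  then have "coprime (int k) (int r)" using assms(1)
    by (metis coprime_commute prime_imp_coprime prime_nat_iff_prime int_dvd_int_iff prime_int_iff coprime_int_iff)
  moreover have "[int k * int k ^ (r - 1) = int k * 1] (mod int r)"
    using fermat_little[OF assms(1), of k] r0 by (simp add: power_eq_if)
  ultimately show ?thesis using cong_mult_lcancel by blast
qed

lemma psum_top: assumes "prime r" shows "[psum r (r - 1) = -1] (mod int r)"
proof -
  have r2: "r \<ge> 2" using assms prime_ge_2_nat by blast
  have "psum r (r - 1) = (\<Sum>k\<in>{0<..<r}. int k ^ (r - 1))"
  proof -
    have "{..<r} = insert 0 {0<..<r}" using r2 by auto
    then show ?thesis unfolding psum_def using r2 by simp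
  qed
  moreover have "[(\<Sum>k\<in>{0<..<r}. int k ^ (r - 1)) = (\<Sum>k\<in>{0<..<r}. 1)] (mod int r)"
    by (intro cong_sum) (use fermat_int[OF assms] in auto)
  moreover have "(\<Sum>k\<in>{0<..<r}. (1::int)) = int r - 1" using r2 by simp
  moreover have "[int r - 1 = -1] (mod int r)" by (simp add: cong_def)
  ultimately show ?thesis by (metis cong_trans)
qed

lemma psum_high: assumes "prime r" "r - 1 < d" "d \<le> 2 * r - 3"
  shows "[psum r d = 0] (mod int r)"
proof -
  define d' where "d' = d - (r - 1)"
  have r2: "r \<ge> 2" using assms prime_ge_2_nat by blast
  have d': "d = (r - 1) + d'" "0 < d'" "d' < r - 1" using assms r2 unfolding d'_def by auto
  have "[int k ^ d = int k ^ d'] (mod int r)" if "k < r" for k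
  proof (cases "k = 0")
    case True
    have "d \<noteq> 0" "d' \<noteq> 0" using d' by auto
    then show ?thesis using True by (simp add: zero_power)
  next
    case False
    have "[int k ^ (r - 1) * int k ^ d' = 1 * int k ^ d'] (mod int r)"
      by (intro cong_mult cong_refl fermat_int) (use False that assms in auto)
    then show ?thesis by (simp add: d'(1) power_add)
  qed
  then have "[psum r d = psum r d'] (mod int r)" unfolding psum_def by (intro cong_sum) auto
  then show ?thesis using psum_low[OF assms(1) d'(3)] by (metis cong_trans)
qed

lemma psum_cong: assumes "prime r" "d \<le> 2 * r - 3"
  shows "[psum r d = (if d = r - 1 then -1 else 0)] (mod int r)"
  using psum_low[OF assms(1)] psum_top[OF assms(1)] psum_high[OF assms(1) _ assms(2)]
  by (cases "d < r - 1"; cases "d = r - 1") auto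

lemma esym_expand:
  assumes "finite A"
  shows "(\<Prod>i\<in>A. (y::rat) - of_nat i) = (\<Sum>s\<le>card A. (-1)^s * esym s A * y ^ (card A - s))"
proof -
  have "(\<Prod>i\<in>A. y - of_nat i) = (\<Prod>i\<in>A. (- of_nat i) + y)" by simp
  also have "\<dots> = (\<Sum>X\<in>Pow A. (\<Prod>i\<in>X. - of_nat i) * (\<Prod>i\<in>A - X. y))"
    by (rule prod_add[OF assms])
  also have "\<dots> = (\<Sum>X\<in>Pow A. (-1) ^ card X * (\<Prod>i\<in>X. of_nat i) * y ^ (card A - card X))"
  proof (rule sum.cong[OF refl])
    fix X assume X: "X \<in> Pow A"
    then have fX: "finite X" using assms finite_subset by auto
    have "(\<Prod>i\<in>X. - (of_nat i :: rat)) = (\<Prod>i\<in>X. (-1) * of_nat i)" by simp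
    also have "\<dots> = (-1) ^ card X * (\<Prod>i\<in>X. of_nat i)" by (simp only: prod.distrib prod_constant)
    finally have 1: "(\<Prod>i\<in>X. - (of_nat i :: rat)) = (-1) ^ card X * (\<Prod>i\<in>X. of_nat i)" .
    have 2: "(\<Prod>i\<in>A - X. y) = y ^ (card A - card X)"
      using X assms by (simp add: card_Diff_subset fX)
    show "(\<Prod>i\<in>X. - of_nat i) * (\<Prod>i\<in>A - X. y) = (-1) ^ card X * (\<Prod>i\<in>X. of_nat i) * y ^ (card A - card X)"
      using 1 2 by simp
  qed
  also have "\<dots> = (\<Sum>s\<le>card A. \<Sum>X\<in>{X \<in> Pow A. card X = s}. (-1) ^ card X * (\<Prod>i\<in>X. of_nat i) * y ^ (card A - card X))"
  proof (rule sum.group[symmetric])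
    show "finite (Pow A)" using assms by simp
    show "card ` Pow A \<subseteq> {..card A}" using assms by (auto intro: card_mono)
  qed simp
  also have "\<dots> = (\<Sum>s\<le>card A. (-1)^s * esym s A * y ^ (card A - s))"
  proof (rule sum.cong[OF refl])
    fix s
    have "(\<Sum>X\<in>{X \<in> Pow A. card X = s}. (-1) ^ card X * (\<Prod>i\<in>X. of_nat i) * y ^ (card A - card X))
        = (\<Sum>X\<in>{X \<in> Pow A. card X = s}. (-1) ^ s * y ^ (card A - s) * (\<Prod>i\<in>X. of_nat i))"
      by (rule sum.cong) auto
    also have "\<dots> = (-1) ^ s * y ^ (card A - s) * (\<Sum>X\<in>{X \<in> Pow A. card X = s}. (\<Prod>i\<in>X. of_nat i))"
      by (simp add: sum_distrib_left)
    also have "{X \<in> Pow A. card X = s} = {T. T \<subseteq> A \<and> card T = s}" by auto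
    finally show "(\<Sum>X\<in>{X \<in> Pow A. card X = s}. (-1) ^ card X * (\<Prod>i\<in>X. of_nat i) * y ^ (card A - card X))
        = (-1)^s * esym s A * y ^ (card A - s)" by (simp add: esym_def)
  qed
  finally show ?thesis .
qed

lemma esym_zero: "esym s {0..<j} = esym s {1..<j}"
proof -
  have "esym s {1..<j} = (\<Sum>T\<in>{T. T \<subseteq> {1..<j} \<and> card T = s}. \<Prod>x\<in>T. of_nat x)" by (simp add: esym_def)
  also have "\<dots> = (\<Sum>T\<in>{T. T \<subseteq> {0..<j} \<and> card T = s}. \<Prod>x\<in>T. of_nat x)"
  proof (rule sum.mono_neutral_left)
    show "finite {T. T \<subseteq> {0..<j} \<and> card T = s}" by simp
    show "{T. T \<subseteq> {1..<j} \<and> card T = s} \<subseteq> {T. T \<subseteq> {0..<j} \<and> card T = s}" by auto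
    show "\<forall>i\<in>{T. T \<subseteq> {0..<j} \<and> card T = s} - {T. T \<subseteq> {1..<j} \<and> card T = s}. (\<Prod>x\<in>i. of_nat x) = (0::rat)"
    proof
      fix T assume T: "T \<in> {T. T \<subseteq> {0..<j} \<and> card T = s} - {T. T \<subseteq> {1..<j} \<and> card T = s}"
      have T1: "T \<subseteq> {0..<j}" "\<not> T \<subseteq> {1..<j}" using T by auto
      then obtain x where "x \<in> T" "x \<notin> {1..<j}" by (meson subsetI)
      with T1(1) have "x = 0" by auto
      then have "0 \<in> T" using \<open>x \<in> T\<close> by simp
      moreover have "finite T" using T finite_subset by auto
      ultimately show "(\<Prod>x\<in>T. of_nat x) = (0::rat)" by (intro prod_zero) auto
    qed
  qed
  finally show ?thesis by (simp add: esym_def)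
qed

lemma esym_Zloc [simp]: "esym s A \<in> Zloc r"
  unfolding esym_def by (intro Zloc_sum Zloc_prod) simp

lemma fact_choose_prod: "of_nat (fact j) * of_nat (n choose j) = (\<Prod>i\<in>{0..<j}. (of_nat n :: rat) - of_nat i)"
  by (simp add: binomial_gbinomial gbinomial_prod_rev)

definition Cj :: "nat \<Rightarrow> nat \<Rightarrow> nat \<Rightarrow> nat" where
  "Cj r l j = (\<Sum>k<r. k ^ (2 * l) * (k\<^sup>2 choose j))"

lemma Cj_expand:
  "of_nat (fact j) * of_nat (Cj r l j) = (\<Sum>s\<le>j. (-1)^s * esym s {0..<j} * of_int (psum r (2 * l + 2 * j - 2 * s)))"
proof -
  have "of_nat (fact j) * of_nat (Cj r l j) = (\<Sum>k<r. (of_nat k :: rat) ^ (2 * l) * (of_nat (fact j) * of_nat (k\<^sup>2 choose j)))"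
    by (simp add: Cj_def sum_distrib_left algebra_simps)
  also have "\<dots> = (\<Sum>k<r. (of_nat k :: rat) ^ (2 * l) * (\<Sum>s\<le>j. (-1)^s * esym s {0..<j} * (of_nat k ^ 2) ^ (j - s)))"
  proof (rule sum.cong[OF refl])
    fix k
    have "of_nat (fact j) * of_nat (k\<^sup>2 choose j) = (\<Prod>i\<in>{0..<j}. (of_nat (k\<^sup>2) :: rat) - of_nat i)"
      by (rule fact_choose_prod)
    also have "\<dots> = (\<Sum>s\<le>j. (-1)^s * esym s {0..<j} * (of_nat (k\<^sup>2)) ^ (j - s))"
      using esym_expand[of "{0..<j}" "of_nat (k\<^sup>2)"] by simp
    finally show "(of_nat k :: rat) ^ (2 * l) * (of_nat (fact j) * of_nat (k\<^sup>2 choose j)) = (of_nat k :: rat) ^ (2 * l) * (\<Sum>s\<le>j. (-1)^s * esym s {0..<j} * (of_nat k ^ 2) ^ (j - s))"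
      by simp
  qed
  also have "\<dots> = (\<Sum>k<r. \<Sum>s\<le>j. (-1)^s * esym s {0..<j} * (of_nat k :: rat) ^ (2 * l + 2 * j - 2 * s))"
  proof (rule sum.cong[OF refl])
    fix k
    have "(of_nat k :: rat) ^ (2 * l) * ((of_nat k ^ 2) ^ (j - s)) = of_nat k ^ (2 * l + 2 * j - 2 * s)" if "s \<le> j" for s
    proof -
      have "2 * l + 2 * j - 2 * s = 2 * l + 2 * (j - s)" using that by simp
      then show ?thesis by (simp add: power_add power_mult)
    qed
    then show "(of_nat k :: rat) ^ (2 * l) * (\<Sum>s\<le>j. (-1)^s * esym s {0..<j} * (of_nat k ^ 2) ^ (j - s)) =
      (\<Sum>s\<le>j. (-1)^s * esym s {0..<j} * (of_nat k :: rat) ^ (2 * l + 2 * j - 2 * s))"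
      by (simp add: sum_distrib_left algebra_simps)
  qed
  also have "\<dots> = (\<Sum>s\<le>j. \<Sum>k<r. (-1)^s * esym s {0..<j} * (of_nat k :: rat) ^ (2 * l + 2 * j - 2 * s))"
    by (rule sum.swap)
  also have "\<dots> = (\<Sum>s\<le>j. (-1)^s * esym s {0..<j} * of_int (psum r (2 * l + 2 * j - 2 * s)))"
    by (simp add: psum_def sum_distrib_left)
  finally show ?thesis .
qed

lemma Zloc_fact [simp]: "(fact n :: rat) \<in> Zloc r"
  by (metis Zloc_nat of_nat_fact)

lemma Zloc_inv_fact: assumes "j < r" shows "1 / of_nat (fact j) \<in> Zloc r"
proof -
  have "of_int 1 / of_int (int (fact j)) \<in> Zloc r"
  proof (rule ZlocI)
    show "int (fact j) \<noteq> 0" by simp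
    fix p :: nat assume p: "prime p" "int p dvd int (fact j)"
    then have "p dvd fact j" by (metis int_dvd_int_iff)
    then have "p \<le> j" using p(1) by (simp add: prime_dvd_fact_iff)
    then show "p < r" using assms by simp
  qed
  then show ?thesis by simp
qed

lemma Cj_cong0:
  assumes r: "prime r" "r = 2 * h + 1" and lh: "l \<le> h" and lj: "l + j \<le> r - 2"
  shows "cg r (of_nat (fact j) * of_nat (Cj r l j)) (if h \<le> l + j then - ((-1)^(l+j-h) * esym (l+j-h) {0..<j}) else 0)"
proof -
  have "cg r (of_nat (fact j) * of_nat (Cj r l j))
      (\<Sum>s\<le>j. (-1)^s * esym s {0..<j} * of_int (if 2 * l + 2 * j - 2 * s = r - 1 then -1 else 0))"
    unfolding Cj_expand
  proof (rule cg_sum)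
    fix s assume s: "s \<in> {..j}"
    have d: "2 * l + 2 * j - 2 * s \<le> 2 * r - 3" using lj r(2) by linarith
    show "cg r ((-1)^s * esym s {0..<j} * of_int (psum r (2 * l + 2 * j - 2 * s)))
        ((-1)^s * esym s {0..<j} * of_int (if 2 * l + 2 * j - 2 * s = r - 1 then -1 else 0))"
      by (rule cg_mult[OF cg_refl cg_int[OF psum_cong[OF r(1) d]]]) auto
  qed
  also have "(\<Sum>s\<le>j. (-1)^s * esym s {0..<j} * of_int (if 2 * l + 2 * j - 2 * s = r - 1 then -1 else 0))
      = (\<Sum>s\<le>j. if s = l + j - h then (if h \<le> l + j then - ((-1)^s * esym s {0..<j}) else 0) else 0)"
  proof (rule sum.cong[OF refl])
    fix s assume "s \<in> {..j}"
    then have "s \<le> j" by simp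
    then have "(2 * l + 2 * j - 2 * s = r - 1) \<longleftrightarrow> (s = l + j - h \<and> h \<le> l + j)" using r(2) by linarith
    then show "(-1)^s * esym s {0..<j} * of_int (if 2 * l + 2 * j - 2 * s = r - 1 then -1 else 0)
      = (if s = l + j - h then (if h \<le> l + j then - ((-1)^s * esym s {0..<j}) else 0) else 0)"
      by auto
  qed
  also have "\<dots> = (if h \<le> l + j then - ((-1)^(l+j-h) * esym (l+j-h) {0..<j}) else 0)"
    using lh by (subst sum.delta) auto
  finally show ?thesis .
qed

definition acoef :: "nat \<Rightarrow> nat \<Rightarrow> nat \<Rightarrow> rat" where
  "acoef l r m = of_nat (fact ((r - 1) div 2)) * of_nat (Cj r l ((r - 1) div 2 + m - l))"

lemma acoef_Hfun:
  assumes r: "prime r" "r \<ge> 2 * l + 2 * m + 3"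
  shows "cg r (acoef l r m) (Hfun l m r)"
proof -
  have "r > 2" using r(2) by linarith
  then have "odd r" using r(1) by (rule prime_odd_nat[rotated])
  define h where "h = (r - 1) div 2"
  have rh: "r = 2 * h + 1" using \<open>odd r\<close> unfolding h_def by (auto elim!: oddE)
  define j where "j = h + m - l"
  have lh: "l \<le> h" using r(2) rh by linarith
  have lj: "l + j \<le> r - 2" and jr: "j < r" using r(2) rh lh unfolding j_def by linarith+
  have hlj: "h \<le> l + j" "l + j - h = m" using lh unfolding j_def by auto
  have c1: "cg r (of_nat (fact j) * of_nat (Cj r l j)) (- ((-1)^m * esym m {0..<j}))"
    using Cj_cong0[OF r(1) rh lh lj] hlj by simp
  have fj: "(of_nat (fact j) :: rat) \<noteq> 0" by simp
  have z: "of_nat (fact h) / of_nat (fact j) \<in> Zloc r"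
    using Zloc_mult[OF Zloc_nat[of "fact h"] Zloc_inv_fact[OF jr]] by simp
  have "cg r ((of_nat (fact h) / of_nat (fact j)) * (of_nat (fact j) * of_nat (Cj r l j)))
      ((of_nat (fact h) / of_nat (fact j)) * (- ((-1)^m * esym m {0..<j})))"
    by (rule cg_mult[OF cg_refl c1]) (use z in auto)
  moreover have "(of_nat (fact h) / of_nat (fact j)) * (of_nat (fact j) * of_nat (Cj r l j)) = acoef l r m"
    using fj unfolding acoef_def h_def j_def by simp
  moreover have "(of_nat (fact h) / of_nat (fact j)) * (- ((-1)^m * esym m {0..<j})) = Hfun l m r"
    unfolding Hfun_def Let_def h_def j_def by (simp add: esym_zero)
  ultimately show ?thesis by simp
qed

lemma esym_0: "finite A \<Longrightarrow> esym 0 A = 1"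
proof -
  assume "finite A"
  then have "{T. T \<subseteq> A \<and> card T = 0} = {{}}" by (auto dest: finite_subset)
  then show ?thesis by (simp add: esym_def)
qed

lemma esym_insert:
  assumes "finite A" "a \<notin> A"
  shows "esym (Suc m) (insert a A) = esym (Suc m) A + of_nat a * esym m A"
proof -
  have split: "{T. T \<subseteq> insert a A \<and> card T = Suc m} = {T. T \<subseteq> A \<and> card T = Suc m} \<union> insert a ` {T. T \<subseteq> A \<and> card T = m}"
  proof (rule set_eqI, rule iffI)
    fix T assume T: "T \<in> {T. T \<subseteq> insert a A \<and> card T = Suc m}"
    show "T \<in> {T. T \<subseteq> A \<and> card T = Suc m} \<union> insert a ` {T. T \<subseteq> A \<and> card T = m}"
    proof (cases "a \<in> T")
      case True
      have fT: "finite T" using T assms(1) finite_subset by auto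
      have "T = insert a (T - {a})" using True by auto
      moreover have "T - {a} \<subseteq> A" "card (T - {a}) = m" using T True fT by auto
      ultimately show ?thesis by blast
    next
      case False
      then show ?thesis using T by auto
    qed
  next
    fix T assume T: "T \<in> {T. T \<subseteq> A \<and> card T = Suc m} \<union> insert a ` {T. T \<subseteq> A \<and> card T = m}"
    then show "T \<in> {T. T \<subseteq> insert a A \<and> card T = Suc m}"
    proof
      assume "T \<in> insert a ` {T. T \<subseteq> A \<and> card T = m}"
      then obtain U where U: "U \<subseteq> A" "card U = m" "T = insert a U" by auto
      have "finite U" using U assms(1) finite_subset by auto
      moreover have "a \<notin> U" using U assms(2) by auto
      ultimately show ?thesis using U by auto
    qed auto
  qed
  have disj: "{T. T \<subseteq> A \<and> card T = Suc m} \<inter> insert a ` {T. T \<subseteq> A \<and> card T = m} = {}"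
    using assms(2) by auto
  have inj: "inj_on (insert a) {T. T \<subseteq> A \<and> card T = m}"
    using assms(2) by (auto simp: inj_on_def)
  have fin1: "finite {T. T \<subseteq> A \<and> card T = Suc m}" using assms(1) by simp
  have fin2: "finite (insert a ` {T. T \<subseteq> A \<and> card T = m})" using assms(1) by simp
  have "esym (Suc m) (insert a A) = esym (Suc m) A + (\<Sum>T\<in>(insert a ` {T. T \<subseteq> A \<and> card T = m}). \<Prod>x\<in>T. of_nat x)"
    unfolding esym_def split by (rule sum.union_disjoint[OF fin1 fin2 disj])
  also have "(\<Sum>T\<in>(insert a ` {T. T \<subseteq> A \<and> card T = m}). \<Prod>x\<in>T. (of_nat x :: rat)) = (\<Sum>T\<in>{T. T \<subseteq> A \<and> card T = m}. \<Prod>x\<in>insert a T. of_nat x)"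
    by (rule sum.reindex[OF inj, unfolded comp_def])
  also have "\<dots> = (\<Sum>T\<in>{T. T \<subseteq> A \<and> card T = m}. of_nat a * (\<Prod>x\<in>T. of_nat x))"
  proof (rule sum.cong[OF refl])
    fix T assume "T \<in> {T. T \<subseteq> A \<and> card T = m}"
    then have "finite T" "a \<notin> T" using assms finite_subset by auto
    then show "(\<Prod>x\<in>insert a T. of_nat x) = (of_nat a :: rat) * (\<Prod>x\<in>T. of_nat x)" by simp
  qed
  also have "\<dots> = of_nat a * esym m A" by (simp add: esym_def sum_distrib_left)
  finally show ?thesis .
qed

lemma esym_Suc_sum: "esym (Suc m) {1..<M} = (\<Sum>k<M. of_nat k * esym m {1..<k})"
proof (induction M)
  case 0
  then show ?case by (simp add: esym_def)
next
  case (Suc M)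
  show ?case
  proof (cases "M = 0")
    case True
    then show ?thesis by (simp add: esym_def)
  next
    case False
    then have "{1..<Suc M} = insert M {1..<M}" by auto
    then have "esym (Suc m) {1..<Suc M} = esym (Suc m) {1..<M} + of_nat M * esym m {1..<M}"
      by (simp add: esym_insert)
    then show ?thesis using Suc by simp
  qed
qed

lemma antideriv_monom: "\<exists>P. \<forall>M. poly P (of_nat M) = (\<Sum>k<M. (of_nat k :: rat) ^ d)"
proof (induction d rule: less_induct)
  case (less d)
  then have "\<forall>i\<in>{..<d}. \<exists>P. \<forall>M. poly P (of_nat M) = (\<Sum>k<M. (of_nat k :: rat) ^ i)" by blast
  then obtain F where F: "\<And>i M. i < d \<Longrightarrow> poly (F i) (of_nat M) = (\<Sum>k<M. (of_nat k :: rat) ^ i)"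
    by (metis lessThan_iff bchoice)
  define P where "P = Polynomial.smult (1 / of_nat (Suc d)) (Polynomial.monom 1 (Suc d) - (\<Sum>i<d. Polynomial.smult (of_nat (Suc d choose i)) (F i)))"
  have "poly P (of_nat M) = (\<Sum>k<M. (of_nat k :: rat) ^ d)" for M
  proof -
    have ps: "of_int (psum M i) = (\<Sum>k<M. (of_nat k :: rat) ^ i)" for i by (simp add: psum_def)
    have "(of_nat M :: rat) ^ Suc d = of_int (int M ^ Suc d)" by simp
    also have "\<dots> = (\<Sum>i<Suc d. of_nat (Suc d choose i) * (\<Sum>k<M. (of_nat k :: rat) ^ i))"
      unfolding psum_telescope lessThan_Suc_atMost[symmetric] by (simp add: ps)
    also have "\<dots> = (\<Sum>i<d. of_nat (Suc d choose i) * (\<Sum>k<M. (of_nat k :: rat) ^ i)) + of_nat (Suc d) * (\<Sum>k<M. (of_nat k :: rat) ^ d)"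
      by simp
    finally have eq: "(of_nat M :: rat) ^ Suc d = (\<Sum>i<d. of_nat (Suc d choose i) * (\<Sum>k<M. (of_nat k :: rat) ^ i)) + of_nat (Suc d) * (\<Sum>k<M. (of_nat k :: rat) ^ d)" .
    have "poly P (of_nat M) = (1 / of_nat (Suc d)) * ((of_nat M) ^ Suc d - (\<Sum>i<d. of_nat (Suc d choose i) * poly (F i) (of_nat M)))"
      unfolding P_def by (simp add: poly_monom poly_sum)
    also have "\<dots> = (1 / of_nat (Suc d)) * ((of_nat M) ^ Suc d - (\<Sum>i<d. of_nat (Suc d choose i) * (\<Sum>k<M. (of_nat k :: rat) ^ i)))"
      using F by simp
    also have "\<dots> = (\<Sum>k<M. (of_nat k :: rat) ^ d)" unfolding eq by (simp del: of_nat_Suc)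
    finally show ?thesis .
  qed
  then show ?case by blast
qed

lemma antideriv: "\<exists>P. \<forall>M. poly P (of_nat M) = (\<Sum>k<M. poly Q (of_nat k :: rat))"
proof -
  obtain F where F: "\<And>d M. poly (F d) (of_nat M) = (\<Sum>k<M. (of_nat k :: rat) ^ d)"
    using antideriv_monom by metis
  define P where "P = (\<Sum>i\<le>degree Q. smult (coeff Q i) (F i))"
  have "poly P (of_nat M) = (\<Sum>k<M. poly Q (of_nat k :: rat))" for M
  proof -
    have "poly P (of_nat M) = (\<Sum>i\<le>degree Q. coeff Q i * (\<Sum>k<M. (of_nat k :: rat) ^ i))"
      unfolding P_def by (simp add: poly_sum F)
    also have "\<dots> = (\<Sum>i\<le>degree Q. \<Sum>k<M. coeff Q i * (of_nat k :: rat) ^ i)" by (simp add: sum_distrib_left)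
    also have "\<dots> = (\<Sum>k<M. \<Sum>i\<le>degree Q. coeff Q i * (of_nat k :: rat) ^ i)" by (rule sum.swap)
    also have "\<dots> = (\<Sum>k<M. poly Q (of_nat k :: rat))" by (simp add: poly_altdef)
    finally show ?thesis .
  qed
  then show ?thesis by blast
qed

lemma esym_poly: "\<exists>P. \<forall>M. esym m {1..<M} = poly P (of_nat M)"
proof (induction m)
  case 0
  show ?case by (intro exI[of _ 1]) (simp add: esym_0)
next
  case (Suc m)
  then obtain P where P: "\<And>M. esym m {1..<M} = poly P (of_nat M)" by blast
  obtain Q where Q: "\<And>M. poly Q (of_nat M) = (\<Sum>k<M. poly ([:0, 1:] * P) (of_nat k :: rat))"
    using antideriv by metis
  have "esym (Suc m) {1..<M} = poly Q (of_nat M)" for M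
    unfolding esym_Suc_sum Q by (simp add: P[symmetric])
  then show ?case by blast
qed

lemma poly_Zloc: assumes "\<forall>i. Polynomial.coeff P i \<in> Zloc r" "x \<in> Zloc r" shows "poly P x \<in> Zloc r"
  unfolding poly_altdef using assms by (intro Zloc_sum Zloc_mult Zloc_power) auto

lemma cg_poly: "\<forall>i. Polynomial.coeff P i \<in> Zloc r \<Longrightarrow> cg r x y \<Longrightarrow> x \<in> Zloc r \<Longrightarrow> y \<in> Zloc r \<Longrightarrow> cg r (poly P x) (poly P y)"
proof (induction P)
  case 0
  then show ?case by simp
next
  case (pCons a p)
  have cp: "\<forall>i. Polynomial.coeff p i \<in> Zloc r" using pCons.prems(1) by (metis coeff_pCons_Suc)
  have ca: "a \<in> Zloc r" using pCons.prems(1) by (metis coeff_pCons_0)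
  have "cg r (x * poly p x) (y * poly p y)"
    by (rule cg_mult[OF pCons.prems(2) pCons.IH[OF cp pCons.prems(2-4)]]) (use poly_Zloc[OF cp pCons.prems(3)] pCons.prems(4) in auto)
  then show ?case by (simp add: cg_add)
qed

lemma cg_prod: "(\<And>i. i \<in> A \<Longrightarrow> cg r (f i) (g i) \<and> f i \<in> Zloc r \<and> g i \<in> Zloc r) \<Longrightarrow> cg r (prod f A) (prod g A)"
proof (induction A rule: infinite_finite_induct)
  case (insert a A)
  have "cg r (f a * prod f A) (g a * prod g A)"
    using insert by (intro cg_mult) (auto intro!: Zloc_prod)
  then show ?case using insert by simp
qed auto

lemma fact_ratio: "(fact (a + d) :: rat) / fact a = (\<Prod>i<d. of_nat (a + 1 + i))"
proof (induction d)
  case 0 then show ?case by simp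
next
  case (Suc d)
  have "(fact (a + Suc d) :: rat) = of_nat (a + 1 + d) * fact (a + d)" by simp
  then have "(fact (a + Suc d) :: rat) / fact a = of_nat (a + 1 + d) * (fact (a + d) / fact a)" by simp
  then show ?case using Suc by (simp add: mult.commute)
qed

lemma Hfun_res: "\<exists>c R. \<forall>r. prime r \<and> r \<ge> R \<longrightarrow> Hfun l m r \<in> Zloc r \<and> c \<in> Zloc r \<and> cg r (Hfun l m r) c"
proof -
  obtain P where P: "\<And>M. esym m {1..<M} = poly P (of_nat M)" using esym_poly by metis
  define t0 :: rat where "t0 = of_nat m - of_nat l - 1 / 2"
  define F :: rat where "F = (if m \<le> l then (\<Prod>i<l - m. t0 + 1 + of_nat i) else 1 / (\<Prod>i<m - l. 1 / 2 + of_nat i))"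
  define c where "c = F * (-1) ^ (m + 1) * poly P t0"
  obtain R1 where R1: "\<forall>r \<ge> R1. \<forall>x\<in>insert F (insert c (insert (1/2) (Polynomial.coeff P ` {..degree P}))). x \<in> Zloc r"
    using Zloc_large_fin[of "insert F (insert c (insert (1/2) (Polynomial.coeff P ` {..degree P})))"] by auto
  show ?thesis
  proof (intro exI[of _ c] exI[of _ "max R1 (2 * l + 2 * m + 3)"] allI impI)
    fix r assume r: "prime r \<and> max R1 (2 * l + 2 * m + 3) \<le> r"
    have rR: "r \<ge> R1" "r \<ge> 2 * l + 2 * m + 3" "prime r" using r by auto
    have "r > 2" using rR(2) by linarith
    then have "odd r" using rR(3) by (rule prime_odd_nat[rotated])
    define h where "h = (r - 1) div 2"
    have rh: "r = 2 * h + 1" using \<open>odd r\<close> unfolding h_def by (auto elim!: oddE)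
    define j where "j = h + m - l"
    have lh: "l \<le> h" using rR(2) rh by linarith
    have jr: "j < r" using rR(2) rh lh unfolding j_def by linarith
    have ZF: "F \<in> Zloc r" and Zc: "c \<in> Zloc r" and Zh: "1/2 \<in> Zloc r" using R1 rR(1) by auto
    have ZP: "\<forall>i. Polynomial.coeff P i \<in> Zloc r"
    proof
      fix i show "Polynomial.coeff P i \<in> Zloc r"
        using R1 rR(1) by (cases "i \<le> degree P") (auto simp: coeff_eq_0)
    qed
    have Zt0: "t0 \<in> Zloc r" unfolding t0_def using Zh by auto
    have ch: "cg r (of_nat h) (- 1 / 2)"
    proof -
      have "of_nat h - (- 1 / 2) = (of_nat r :: rat) * (1 / 2)" using rh by simp
      then show ?thesis unfolding cg_def using Zh by blast
    qed
    have cj: "cg r (of_nat j) t0"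
    proof -
      have e1: "(of_nat j :: rat) = of_nat h + of_nat m - of_nat l" unfolding j_def using lh by (simp add: of_nat_diff)
      have e2: "t0 = - 1 / 2 + of_nat m - of_nat l" unfolding t0_def by simp
      show ?thesis unfolding e1 e2 by (intro cg_diff cg_add ch cg_refl)
    qed
    have ce: "cg r (esym m {1..<j}) (poly P t0)"
      unfolding P by (rule cg_poly[OF ZP cj]) (use Zt0 in auto)
    have cF: "cg r ((fact h :: rat) / fact j) F"
    proof (cases "m \<le> l")
      case True
      have hj: "h = j + (l - m)" unfolding j_def using True lh by simp
      have "(fact h :: rat) / fact j = (\<Prod>i<l - m. of_nat (j + 1 + i))" unfolding hj by (rule fact_ratio)
      moreover have "cg r (\<Prod>i<l - m. of_nat (j + 1 + i)) (\<Prod>i<l - m. t0 + 1 + of_nat i)"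
      proof (rule cg_prod)
        fix i
        have "cg r (of_nat j + 1 + of_nat i) (t0 + 1 + of_nat i)" by (intro cg_add cj cg_refl)
        moreover have e: "(of_nat (j + 1 + i) :: rat) = of_nat j + 1 + of_nat i" by simp
        ultimately have "cg r (of_nat (j + 1 + i)) (t0 + 1 + of_nat i)" by (simp only: e)
        then show "cg r (of_nat (j + 1 + i)) (t0 + 1 + of_nat i) \<and> of_nat (j + 1 + i) \<in> Zloc r \<and> t0 + 1 + of_nat i \<in> Zloc r"
          using Zt0 by simp
      qed
      ultimately show ?thesis using True unfolding F_def by simp
    next
      case False
      have jh: "j = h + (m - l)" unfolding j_def using False by simp
      have e1: "(fact h :: rat) / fact j = 1 / (\<Prod>i<m - l. of_nat (h + 1 + i))"
        using fact_ratio[of h "m - l"] jh by (simp add: divide_simps)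
      have "cg r (\<Prod>i<m - l. of_nat (h + 1 + i)) (\<Prod>i<m - l. 1 / 2 + of_nat i)"
      proof (rule cg_prod)
        fix i
        have "cg r (of_nat h + 1 + of_nat i) (- 1 / 2 + 1 + of_nat i)" by (intro cg_add ch cg_refl)
        moreover have e: "(of_nat (h + 1 + i) :: rat) = of_nat h + 1 + of_nat i" by simp
        moreover have e2: "(1 / 2 + of_nat i :: rat) = - 1 / 2 + 1 + of_nat i" by simp
        ultimately have "cg r (of_nat (h + 1 + i)) (1 / 2 + of_nat i)" by (simp only: e e2)
        then show "cg r (of_nat (h + 1 + i)) (1 / 2 + of_nat i) \<and> of_nat (h + 1 + i) \<in> Zloc r \<and> 1 / 2 + of_nat i \<in> Zloc r"
          using Zh by simp
      qed
      moreover have "1 / (\<Prod>i<m - l. of_nat (h + 1 + i)) \<in> Zloc r"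
        using Zloc_mult[OF Zloc_fact[of h r] Zloc_inv_fact[OF jr]] e1 by (simp add: of_nat_fact)
      moreover have "1 / (\<Prod>i<m - l. 1 / 2 + of_nat i) \<in> Zloc r" using ZF False unfolding F_def by simp
      moreover have "(\<Prod>i<m - l. of_nat (h + 1 + i)) \<noteq> (0::rat)" by (simp add: prod_zero_iff)
      moreover have "(\<Prod>i<m - l. 1 / 2 + of_nat i) \<noteq> (0::rat)"
      proof -
        have "1 / 2 + (of_nat i :: rat) \<noteq> 0" for i
        proof -
          have "(0::rat) < 1 / 2 + of_nat i" by (simp add: add_pos_nonneg)
          then show ?thesis by simp
        qed
        then show ?thesis by (simp add: prod_zero_iff)
      qed
      ultimately have "cg r (1 / (\<Prod>i<m - l. of_nat (h + 1 + i))) (1 / (\<Prod>i<m - l. 1 / 2 + of_nat i))"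
        by (intro cg_inverse) auto
      then show ?thesis using False e1 unfolding F_def by simp
    qed
    have ZfF: "(fact h :: rat) / fact j \<in> Zloc r"
      using Zloc_mult[OF Zloc_fact[of h r] Zloc_inv_fact[OF jr]] by (simp add: of_nat_fact)
    have "cg r ((fact h :: rat) / fact j * (-1) ^ (m + 1) * esym m {1..<j}) (F * (-1) ^ (m + 1) * poly P t0)"
    proof (rule cg_mult[OF cg_mult[OF cF cg_refl] ce])
      show "(-1) ^ (m + 1) \<in> Zloc r" by (intro Zloc_power) simp
      show "esym m {1..<j} \<in> Zloc r" by simp
      show "F * (-1) ^ (m + 1) \<in> Zloc r" using ZF by (intro Zloc_mult Zloc_power) auto
    qed (use ZF in auto)
    moreover have "Hfun l m r = (fact h :: rat) / fact j * (-1) ^ (m + 1) * esym m {1..<j}"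
      unfolding Hfun_def Let_def h_def j_def by simp
    ultimately have cH: "cg r (Hfun l m r) c" unfolding c_def by simp
    show "Hfun l m r \<in> Zloc r \<and> c \<in> Zloc r \<and> cg r (Hfun l m r) c"
      using cH Zc cg_Zloc by blast
  qed
qed

inductive_set ZQ :: "nat \<Rightarrow> complex \<Rightarrow> complex set" for r :: nat and q :: complex where
  ZQ_rat: "c \<in> Zloc r \<Longrightarrow> of_rat c \<in> ZQ r q"
| ZQ_q: "q \<in> ZQ r q"
| ZQ_add: "a \<in> ZQ r q \<Longrightarrow> b \<in> ZQ r q \<Longrightarrow> a + b \<in> ZQ r q"
| ZQ_mult: "a \<in> ZQ r q \<Longrightarrow> b \<in> ZQ r q \<Longrightarrow> a * b \<in> ZQ r q"

lemma ZQ_0 [simp]: "0 \<in> ZQ r q" using ZQ_rat[of 0 r q] by simp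
lemma ZQ_1 [simp]: "1 \<in> ZQ r q" using ZQ_rat[of 1 r q] by simp
lemma ZQ_nat [simp]: "of_nat n \<in> ZQ r q" using ZQ_rat[of "of_nat n" r q] by simp
lemma ZQ_int [simp]: "of_int n \<in> ZQ r q" using ZQ_rat[of "of_int n" r q] by simp
lemma ZQ_uminus: "a \<in> ZQ r q \<Longrightarrow> - a \<in> ZQ r q"
  using ZQ_mult[OF ZQ_int[of "-1"]] by fastforce
lemma ZQ_diff: "a \<in> ZQ r q \<Longrightarrow> b \<in> ZQ r q \<Longrightarrow> a - b \<in> ZQ r q"
  using ZQ_add[OF _ ZQ_uminus] by fastforce
lemma ZQ_power: "a \<in> ZQ r q \<Longrightarrow> a ^ n \<in> ZQ r q"
  by (induction n) (auto intro: ZQ_mult)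
lemma ZQ_sum: "(\<And>i. i \<in> A \<Longrightarrow> f i \<in> ZQ r q) \<Longrightarrow> sum f A \<in> ZQ r q"
  by (induction A rule: infinite_finite_induct) (auto intro: ZQ_add)

lemma map_poly_of_rat_add: "map_poly (of_rat :: rat \<Rightarrow> complex) (p + p') = map_poly of_rat p + map_poly of_rat p'"
  by (rule poly_eqI) (simp add: coeff_map_poly of_rat_add)

lemma map_poly_of_rat_mult: "map_poly (of_rat :: rat \<Rightarrow> complex) (p * p') = map_poly of_rat p * map_poly of_rat p'"
  by (rule poly_eqI) (simp add: coeff_map_poly coeff_mult of_rat_sum of_rat_mult)

lemma ZQ_poly: "z \<in> ZQ r q \<Longrightarrow> \<exists>p. (\<forall>i. Polynomial.coeff p i \<in> Zloc r) \<and> z = poly (map_poly of_rat p) q"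
proof (induction rule: ZQ.induct)
  case (ZQ_rat c)
  show ?case
  proof (intro exI[of _ "[:c:]"] conjI allI)
    fix i show "Polynomial.coeff [:c:] i \<in> Zloc r" using ZQ_rat by (cases i) auto
  qed (simp add: map_poly_pCons)
next
  case ZQ_q
  show ?case
  proof (intro exI[of _ "[:0, 1:]"] conjI allI)
    fix i show "Polynomial.coeff [:0, 1:] i \<in> Zloc r" by (cases i) (auto simp: coeff_pCons split: nat.split)
  qed (simp add: map_poly_pCons)
next
  case (ZQ_add a b)
  then obtain p p' where "\<forall>i. Polynomial.coeff p i \<in> Zloc r" "a = poly (map_poly of_rat p) q"
    "\<forall>i. Polynomial.coeff p' i \<in> Zloc r" "b = poly (map_poly of_rat p') q" by blast
  then show ?case by (intro exI[of _ "p + p'"]) (simp add: map_poly_of_rat_add)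
next
  case (ZQ_mult a b)
  then obtain p p' where "\<forall>i. Polynomial.coeff p i \<in> Zloc r" "a = poly (map_poly of_rat p) q"
    "\<forall>i. Polynomial.coeff p' i \<in> Zloc r" "b = poly (map_poly of_rat p') q" by blast
  then show ?case by (intro exI[of _ "p * p'"]) (auto simp: map_poly_of_rat_mult coeff_mult intro!: Zloc_sum)
qed

lemma root_pow: assumes "r > 0" shows "cis (2 * pi / real r) ^ r = 1"
proof -
  have "cis (2 * pi / real r) ^ r = cis (real r * (2 * pi / real r))" by (rule Complex.DeMoivre)
  also have "real r * (2 * pi / real r) = 2 * pi" using assms by simp
  finally show ?thesis by simp
qed

lemma root_ne1: assumes "r \<ge> 3" shows "cis (2 * pi / real r) \<noteq> 1"
proof -
  have "0 < 2 * pi / real r" using assms by simp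
  moreover have "2 * pi / real r < pi"
  proof -
    have "2 * pi < pi * real r" using assms pi_gt_zero by (simp add: mult_strict_left_mono)
    then show ?thesis using assms by (simp add: divide_less_eq)
  qed
  ultimately have "0 < sin (2 * pi / real r)" by (rule sin_gt_zero)
  show ?thesis
  proof
    assume "cis (2 * pi / real r) = 1"
    then have "Im (cis (2 * pi / real r)) = Im 1" by (rule arg_cong)
    then show False using \<open>0 < sin (2 * pi / real r)\<close> by simp
  qed
qed

lemma r_as_power:
  fixes x :: complex
  assumes r3: "r \<ge> 3" and odd: "odd r" and xr: "(x + 1) ^ r = 1" and x0: "x \<noteq> 0"
    and xZ: "x \<in> ZQ r q"
  shows "\<exists>W \<in> ZQ r q. of_nat r = x ^ (r - 1) * W"
proof -
  define B where "B = (\<Sum>j\<in>{2..<r}. of_rat (of_nat (r choose j) / of_nat r) * x ^ (j - 2))"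
  have BZ: "B \<in> ZQ r q" unfolding B_def
  proof (intro ZQ_sum ZQ_mult ZQ_power xZ ZQ_rat)
    fix j assume j: "j \<in> {2..<r}"
    have eqj: "(of_nat (r choose j) / of_nat r :: rat) = of_nat ((r - 1) choose (j - 1)) * (1 / of_nat j)"
    proof -
      have "j * (r choose j) = r * ((r - 1) choose (j - 1))" using j
        by (intro times_binomial_minus1_eq) auto
      then have "(of_nat (j * (r choose j)) :: rat) = of_nat (r * ((r - 1) choose (j - 1)))"
        by (simp only:)
      then have "(of_nat j :: rat) * of_nat (r choose j) = of_nat r * of_nat ((r - 1) choose (j - 1))"
        by (simp only: of_nat_mult)
      then show ?thesis using j r3 by (simp add: field_simps)
    qed
    have "1 / (of_nat j :: rat) \<in> Zloc r" using j by (intro Zloc_inv_nat) auto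
    then show "of_nat (r choose j) / of_nat r \<in> Zloc r" unfolding eqj by (intro Zloc_mult Zloc_nat)
  qed
  have "1 = (x + 1) ^ r" using xr by simp
  also have "\<dots> = (\<Sum>j\<le>r. of_nat (r choose j) * x ^ j)" by (subst binomial_ring) simp
  also have "{..r} = insert 0 (insert 1 (insert r {2..<r}))" using r3 by auto
  also have "(\<Sum>j\<in>insert 0 (insert 1 (insert r {2..<r})). of_nat (r choose j) * x ^ j) =
      1 + of_nat r * x + x ^ r + (\<Sum>j\<in>{2..<r}. of_nat (r choose j) * x ^ j)"
    using r3 by (simp add: add.assoc)
  finally have e1: "of_nat r * x + x ^ r + (\<Sum>j\<in>{2..<r}. of_nat (r choose j) * x ^ j) = 0" by (simp add: add.assoc)
  have e2: "(\<Sum>j\<in>{2..<r}. of_nat (r choose j) * x ^ j) = of_nat r * x * x * B"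
    unfolding B_def sum_distrib_left
  proof (rule sum.cong[OF refl])
    fix j assume j: "j \<in> {2..<r}"
    have jj: "j = Suc (Suc (j - 2))" using j by auto
    have xj: "x ^ j = x * x * x ^ (j - 2)" by (subst jj) (simp add: mult.assoc)
    have h2: "(of_rat (of_nat (r choose j) / of_nat r) :: complex) * of_nat r = of_nat (r choose j)"
      using r3 by (simp add: of_rat_divide)
    show "of_nat (r choose j) * x ^ j = of_nat r * x * x * (of_rat (of_nat (r choose j) / of_nat r) * x ^ (j - 2))"
      unfolding xj h2[symmetric] by (simp only: ac_simps)
  qed
  have "x * (of_nat r * (1 + x * B) + x ^ (r - 1)) = 0"
  proof -
    have rr: "r = Suc (r - 1)" using r3 by simp
    have "x ^ r = x * x ^ (r - 1)" by (subst rr) simp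
    then show ?thesis using e1 e2 by (simp add: algebra_simps)
  qed
  then have E: "of_nat r * (1 + x * B) + x ^ (r - 1) = 0" using x0 by simp
  have e3: "of_nat r * (1 - (- x * B)) = - (x ^ (r - 1))"
    using E by (simp add: eq_neg_iff_add_eq_0)
  define y where "y = - x * B"
  have "of_nat r = of_nat r * (1 - y ^ (r - 1)) + of_nat r * y ^ (r - 1)" by (simp add: algebra_simps)
  also have "of_nat r * (1 - y ^ (r - 1)) = of_nat r * (1 - y) * (\<Sum>i<r - 1. y ^ i)"
    by (simp add: one_diff_power_eq)
  also have "\<dots> = - (x ^ (r - 1)) * (\<Sum>i<r - 1. y ^ i)" using e3 unfolding y_def by simp
  also have "y ^ (r - 1) = x ^ (r - 1) * B ^ (r - 1)"
  proof -
    have "even (r - 1)" using odd by simp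
    then show ?thesis unfolding y_def by (simp add: power_mult_distrib)
  qed
  finally have "of_nat r = x ^ (r - 1) * (of_nat r * B ^ (r - 1) - (\<Sum>i<r - 1. y ^ i))"
    by (simp add: algebra_simps)
  moreover have "of_nat r * B ^ (r - 1) - (\<Sum>i<r - 1. y ^ i) \<in> ZQ r q"
    unfolding y_def by (intro ZQ_diff ZQ_mult ZQ_nat ZQ_power BZ ZQ_sum ZQ_uminus xZ)
  ultimately show ?thesis by blast
qed

lemma Cj_low: assumes r: "prime r" "r = 2 * h + 1" and j: "l + j < h"
  shows "\<exists>z\<in>Zloc r. (of_nat (Cj r l j) :: rat) = of_nat r * z"
proof -
  have c: "cg r (of_nat (fact j) * of_nat (Cj r l j)) 0"
    using Cj_cong0[OF r, of l j] j r(2) by simp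
  have jr: "j < r" using j r(2) by simp
  have "cg r ((of_nat (fact j) * of_nat (Cj r l j)) * (1 / of_nat (fact j))) 0"
    by (rule cg_0_mult[OF c]) (use Zloc_inv_fact[OF jr] in simp)
  then have "cg r (of_nat (Cj r l j)) 0" by simp
  then show ?thesis unfolding cg_def by simp
qed

lemma wgauss_expand:
  fixes x :: complex
  assumes "q = x + 1"
  shows "wgauss r (2 * l) q = (\<Sum>j\<le>(r - 1)\<^sup>2. of_nat (Cj r l j) * x ^ j)"
proof -
  have "q ^ (k\<^sup>2) = (\<Sum>j\<le>(r - 1)\<^sup>2. of_nat (k\<^sup>2 choose j) * x ^ j)" if k: "k < r" for k
  proof -
    have "q ^ (k\<^sup>2) = (\<Sum>j\<le>k\<^sup>2. of_nat (k\<^sup>2 choose j) * x ^ j)"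
      unfolding assms by (subst binomial_ring) simp
    also have "\<dots> = (\<Sum>j\<le>(r - 1)\<^sup>2. of_nat (k\<^sup>2 choose j) * x ^ j)"
    proof (rule sum.mono_neutral_left)
      have "k \<le> r - 1" using k by simp
      then show "{..k\<^sup>2} \<subseteq> {..(r - 1)\<^sup>2}" by (simp add: power_mono)
    qed auto
    finally show ?thesis .
  qed
  then have "wgauss r (2 * l) q = (\<Sum>k<r. of_nat k ^ (2 * l) * (\<Sum>j\<le>(r - 1)\<^sup>2. of_nat (k\<^sup>2 choose j) * x ^ j))"
    unfolding wgauss_def by simp
  also have "\<dots> = (\<Sum>k<r. \<Sum>j\<le>(r - 1)\<^sup>2. of_nat (k ^ (2 * l) * (k\<^sup>2 choose j)) * x ^ j)"
    by (simp add: sum_distrib_left mult.assoc)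
  also have "\<dots> = (\<Sum>j\<le>(r - 1)\<^sup>2. \<Sum>k<r. of_nat (k ^ (2 * l) * (k\<^sup>2 choose j)) * x ^ j)"
    by (rule sum.swap)
  also have "\<dots> = (\<Sum>j\<le>(r - 1)\<^sup>2. of_nat (Cj r l j) * x ^ j)"
    unfolding Cj_def by (simp add: sum_distrib_right)
  finally show ?thesis .
qed

lemma main_identity:
  assumes r: "prime r" "odd r" "r \<ge> 2 * l + 3"
  shows "\<exists>w \<in> ZQ r (cis (2 * pi / real r)). fact ((r - 1) div 2) * wgauss r (2 * l) (cis (2 * pi / real r)) =
    (\<Sum>m = 0..(r - 3) div 2. of_rat (acoef l r m) * (cis (2 * pi / real r) - 1) ^ ((r - 1) div 2 + m - l))
    + (cis (2 * pi / real r) - 1) ^ (r - 1 - l) * w"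
proof -
  define q where "q = cis (2 * pi / real r)"
  define h where "h = (r - 1) div 2"
  have rh: "r = 2 * h + 1" using r(2) unfolding h_def by (auto elim!: oddE)
  define N where "N = h - l"
  have lh: "l < h" using r(3) rh by linarith
  define x where "x = q - 1"
  define J where "J = (r - 1)\<^sup>2"
  have r3: "r \<ge> 3" using r(3) by linarith
  have xr: "(x + 1) ^ r = 1" unfolding x_def q_def using root_pow r3 by simp
  have x0: "x \<noteq> 0" unfolding x_def q_def using root_ne1[OF r3] by simp
  have xZ: "x \<in> ZQ r q" unfolding x_def by (intro ZQ_diff ZQ_q ZQ_1)
  obtain W where WZ: "W \<in> ZQ r q" and Wr: "of_nat r = x ^ (r - 1) * W"
    using r_as_power[OF r3 r(2) xr x0 xZ] by blast
  have NJ: "N + h \<le> Suc J"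
  proof -
    have "N + h \<le> 2 * h" unfolding N_def by simp
    also have "2 * h \<le> (2 * h) * (2 * h)" using lh by simp
    finally show ?thesis unfolding J_def using rh by (simp add: power2_eq_square)
  qed
  define f where "f j = (fact h :: complex) * of_nat (Cj r l j) * x ^ j" for j
  have qx: "q = x + 1" unfolding x_def by simp
  have G: "fact h * wgauss r (2 * l) q = (\<Sum>j\<in>{0..<Suc J}. f j)"
    unfolding wgauss_expand[of q x, OF qx] f_def J_def
    by (simp add: sum_distrib_left atLeast0LessThan lessThan_Suc_atMost mult.assoc)
  also have "\<dots> = (\<Sum>j\<in>{0..<N}. f j) + (\<Sum>j\<in>{N..<N + h}. f j) + (\<Sum>j\<in>{N + h..<Suc J}. f j)"
  proof -
    have "(\<Sum>j\<in>{0..<Suc J}. f j) = (\<Sum>j\<in>{0..<N + h}. f j) + (\<Sum>j\<in>{N + h..<Suc J}. f j)"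
      by (rule sum.atLeastLessThan_concat[symmetric]) (use NJ in auto)
    moreover have "(\<Sum>j\<in>{0..<N + h}. f j) = (\<Sum>j\<in>{0..<N}. f j) + (\<Sum>j\<in>{N..<N + h}. f j)"
      by (rule sum.atLeastLessThan_concat[symmetric]) auto
    ultimately show ?thesis by simp
  qed
  finally have G1: "fact h * wgauss r (2 * l) q = (\<Sum>j\<in>{0..<N}. f j) + (\<Sum>j\<in>{N..<N + h}. f j) + (\<Sum>j\<in>{N + h..<Suc J}. f j)" .
  have mid: "(\<Sum>j\<in>{N..<N + h}. f j) = (\<Sum>m = 0..(r - 3) div 2. of_rat (acoef l r m) * x ^ ((r - 1) div 2 + m - l))"
  proof -
    have "(\<Sum>j\<in>{N..<N + h}. f j) = (\<Sum>m\<in>{0..<h}. f (m + N))"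
      using sum.shift_bounds_nat_ivl[of f 0 N h] by (simp add: add.commute)
    also have "{0..<h} = {0..(r - 3) div 2}" using rh lh by auto
    also have "(\<Sum>m\<in>{0..(r - 3) div 2}. f (m + N)) = (\<Sum>m = 0..(r - 3) div 2. of_rat (acoef l r m) * x ^ ((r - 1) div 2 + m - l))"
    proof (rule sum.cong[OF refl])
      fix m
      have e: "h + m - l = m + N" unfolding N_def using lh by simp
      have fr: "(of_rat (fact h) :: complex) = fact h" by (metis of_nat_fact of_rat_of_nat_eq)
      show "f (m + N) = of_rat (acoef l r m) * x ^ ((r - 1) div 2 + m - l)"
        unfolding acoef_def h_def[symmetric] e f_def by (simp add: of_rat_mult fr)
    qed
    finally show ?thesis .
  qed
  have "\<forall>j\<in>{0..<N}. \<exists>z. z \<in> Zloc r \<and> (of_nat (Cj r l j) :: rat) = of_nat r * z"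
  proof
    fix j assume "j \<in> {0..<N}"
    then have "l + j < h" unfolding N_def by auto
    then show "\<exists>z. z \<in> Zloc r \<and> (of_nat (Cj r l j) :: rat) = of_nat r * z"
      using Cj_low[OF r(1) rh] by blast
  qed
  then obtain zf where zf: "\<And>j. j \<in> {0..<N} \<Longrightarrow> zf j \<in> Zloc r \<and> (of_nat (Cj r l j) :: rat) = of_nat r * zf j"
    by metis
  define wl where "wl = (\<Sum>j\<in>{0..<N}. fact h * W * of_rat (zf j) * x ^ (l + j))"
  define wh where "wh = (\<Sum>j\<in>{N + h..<Suc J}. fact h * of_nat (Cj r l j) * x ^ (j - (N + h)))"
  have low: "(\<Sum>j\<in>{0..<N}. f j) = x ^ (N + h) * wl"
    unfolding wl_def sum_distrib_left
  proof (rule sum.cong[OF refl])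
    fix j assume j: "j \<in> {0..<N}"
    have "(of_nat (Cj r l j) :: complex) = of_rat (of_nat (Cj r l j))" by simp
    also have "\<dots> = of_nat r * of_rat (zf j)" using zf[OF j] by (simp add: of_rat_mult)
    also have "\<dots> = x ^ (r - 1) * W * of_rat (zf j)" using Wr by simp
    finally have c: "(of_nat (Cj r l j) :: complex) = x ^ (r - 1) * W * of_rat (zf j)" .
    have e: "r - 1 = (N + h) + l" unfolding N_def using rh lh by simp
    show "f j = x ^ (N + h) * (fact h * W * of_rat (zf j) * x ^ (l + j))"
      unfolding f_def c e by (simp add: power_add algebra_simps)
  qed
  have high: "(\<Sum>j\<in>{N + h..<Suc J}. f j) = x ^ (N + h) * wh"
    unfolding wh_def sum_distrib_left
  proof (rule sum.cong[OF refl])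
    fix j assume j: "j \<in> {N + h..<Suc J}"
    then have "x ^ j = x ^ (N + h) * x ^ (j - (N + h))" by (simp add: power_add[symmetric])
    then show "f j = x ^ (N + h) * (fact h * of_nat (Cj r l j) * x ^ (j - (N + h)))"
      unfolding f_def by (simp add: algebra_simps)
  qed
  have wZ: "wl + wh \<in> ZQ r q"
  proof (intro ZQ_add)
    show "wl \<in> ZQ r q" unfolding wl_def
    proof (intro ZQ_sum ZQ_mult ZQ_power xZ WZ)
      fix j assume "j \<in> {0..<N}"
      then show "of_rat (zf j) \<in> ZQ r q" using zf by (intro ZQ_rat) auto
    qed (metis ZQ_nat of_nat_fact)
    show "wh \<in> ZQ r q" unfolding wh_def
      by (intro ZQ_sum ZQ_mult ZQ_power xZ ZQ_nat) (metis ZQ_nat of_nat_fact)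
  qed
  have e2: "r - 1 - l = N + h" unfolding N_def using rh lh by simp
  have "fact ((r - 1) div 2) * wgauss r (2 * l) q =
    (\<Sum>m = 0..(r - 3) div 2. of_rat (acoef l r m) * x ^ ((r - 1) div 2 + m - l)) + x ^ (r - 1 - l) * (wl + wh)"
    using G1 mid low high unfolding e2 h_def[symmetric] by (simp add: algebra_simps)
  then show ?thesis using wZ unfolding x_def q_def by blast
qed

theorem lemma6p1:
  fixes l :: nat
  shows "\<exists>(a :: nat \<Rightarrow> nat \<Rightarrow> rat) (u :: nat \<Rightarrow> rat poly).
    (\<exists>R. \<forall>r. prime r \<and> odd r \<and> r \<ge> R \<longrightarrow>
        (let q = cis (2 * pi / real r) in
          (\<forall>m \<le> (r - 3) div 2. a r m \<in> Zloc r) \<and>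
          (\<forall>i. coeff (u r) i \<in> Zloc r) \<and>
          fact ((r - 1) div 2) * wgauss r (2 * l) q =
            (\<Sum>m = 0..(r - 3) div 2. of_rat (a r m) * (q - 1) ^ ((r - 1) div 2 + m - l))
            + (q - 1) ^ (r - 1 - l) * poly (map_poly of_rat (u r)) q)) \<and>
    (\<forall>m. \<exists>c. fermat_fun (Hfun l m) c \<and> fermat_fun (\<lambda>r. a r m) c)"
proof -
  define a where "a = (\<lambda>r m. acoef l r m)"
  define P where "P = (\<lambda>r (p :: rat poly). (\<forall>i. coeff p i \<in> Zloc r) \<and>
     fact ((r - 1) div 2) * wgauss r (2 * l) (cis (2 * pi / real r)) =
            (\<Sum>m = 0..(r - 3) div 2. of_rat (a r m) * (cis (2 * pi / real r) - 1) ^ ((r - 1) div 2 + m - l))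
            + (cis (2 * pi / real r) - 1) ^ (r - 1 - l) * poly (map_poly of_rat p) (cis (2 * pi / real r)))"
  define u where "u = (\<lambda>r. SOME p. P r p)"
  have aZ: "a r m \<in> Zloc r" for r m unfolding a_def acoef_def by simp
  have part1: "\<forall>r. prime r \<and> odd r \<and> r \<ge> 2 * l + 3 \<longrightarrow>
        (let q = cis (2 * pi / real r) in
          (\<forall>m \<le> (r - 3) div 2. a r m \<in> Zloc r) \<and>
          (\<forall>i. coeff (u r) i \<in> Zloc r) \<and>
          fact ((r - 1) div 2) * wgauss r (2 * l) q =
            (\<Sum>m = 0..(r - 3) div 2. of_rat (a r m) * (q - 1) ^ ((r - 1) div 2 + m - l))
            + (q - 1) ^ (r - 1 - l) * poly (map_poly of_rat (u r)) q)"
  proof (intro allI impI)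
    fix r assume r: "prime r \<and> odd r \<and> r \<ge> 2 * l + 3"
    obtain w where w: "w \<in> ZQ r (cis (2 * pi / real r))"
      "fact ((r - 1) div 2) * wgauss r (2 * l) (cis (2 * pi / real r)) =
       (\<Sum>m = 0..(r - 3) div 2. of_rat (acoef l r m) * (cis (2 * pi / real r) - 1) ^ ((r - 1) div 2 + m - l))
       + (cis (2 * pi / real r) - 1) ^ (r - 1 - l) * w"
      using main_identity[of r l] r by blast
    obtain p where p: "\<forall>i. coeff p i \<in> Zloc r" "w = poly (map_poly of_rat p) (cis (2 * pi / real r))"
      using ZQ_poly[OF w(1)] by blast
    have "P r p" unfolding P_def a_def using p w(2) by simp
    then have "P r (u r)" unfolding u_def by (rule someI)
    then show "let q = cis (2 * pi / real r) in
          (\<forall>m \<le> (r - 3) div 2. a r m \<in> Zloc r) \<and>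
          (\<forall>i. coeff (u r) i \<in> Zloc r) \<and>
          fact ((r - 1) div 2) * wgauss r (2 * l) q =
            (\<Sum>m = 0..(r - 3) div 2. of_rat (a r m) * (q - 1) ^ ((r - 1) div 2 + m - l))
            + (q - 1) ^ (r - 1 - l) * poly (map_poly of_rat (u r)) q"
      unfolding Let_def P_def using aZ by blast
  qed
  have part2: "\<forall>m. \<exists>c. fermat_fun (Hfun l m) c \<and> fermat_fun (\<lambda>r. a r m) c"
  proof
    fix m
    obtain c R where cR: "\<And>r. prime r \<and> r \<ge> R \<Longrightarrow> Hfun l m r \<in> Zloc r \<and> c \<in> Zloc r \<and> cg r (Hfun l m r) c"
      using Hfun_res[of l m] by blast
    have f1: "fermat_fun (Hfun l m) c"
      by (rule fermat_funI) (use cR in blast)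
    have f2: "fermat_fun (\<lambda>r. a r m) c"
    proof (rule fermat_funI, intro exI[of _ "max R (2 * l + 2 * m + 3)"] allI impI)
      fix r assume r: "prime r \<and> max R (2 * l + 2 * m + 3) \<le> r"
      then have "cg r (Hfun l m r) c" using cR by auto
      moreover have "cg r (a r m) (Hfun l m r)" unfolding a_def using r by (intro acoef_Hfun) auto
      ultimately show "a r m \<in> Zloc r \<and> cg r (a r m) c" using aZ cg_trans by blast
    qed
    show "\<exists>c. fermat_fun (Hfun l m) c \<and> fermat_fun (\<lambda>r. a r m) c" using f1 f2 by blast
  qed
  show ?thesis using part1 part2 by blast
qed

end
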